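(* For every $f\in\mathbb Z[x_1,\dots,x_n]$, $$\langle f\rangle_n=\mathsf T_{1,2}(\mathsf T_{1,3}+\mathsf T_{2,3})\cdots(\mathsf T_{1,n}+\cdots+\mathsf T_{n-1,n})f.$$ In particular, if $f$ is homogeneous of degree $n-1$, then $\langle f\rangle_n=T_1(T_1+T_2)\cdots(T_1+\cdots+T_{n-1})f$.
   Context: Divided symmetrization: $\langle f\rangle_n=\sum_{\sigma\in S_n}\frac{f(x_{\sigma(1)},\dots,x_{\sigma(n)})}{(x_{\sigma(1)}-x_{\sigma(2)})\cdots(x_{\sigma(n-1)}-x_{\sigma(n)})}$. For $1\le i\le m\le n$, $\mathsf R_{i,m}$ acts on $\mathbb Z[x_1,\dots,x_n]$ by $f\mapsto f(x_1,\dots,x_{i-1},x_m,x_i,\dots,x_{m-1},x_{m+1},\dots,x_n)$, and for $1\le i\le m-1$, $\mathsf T_{i,m}f=\frac{\mathsf R_{i+1,m}f-\mathsf R_{i,m}f}{x_i-x_m}$ (a polynomial); composition is applied right to left. $R_if=f(x_1,\dots,x_{i-1},0,x_i,\dots)$, $T_if=\frac1{x_i}(R_{i+1}f-R_if)$. *)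

theory Defs
  imports "HOL-Library.Poly_Mapping" "HOL-Combinatorics.Permutations" Complex_Main
begin

text \<open>Integer multivariate polynomials in variables x_1, x_2, ...: a monomial is a
finitely supported exponent map nat \<Rightarrow>0 nat, a polynomial a finitely supported
coefficient map on monomials (multiplication = convolution).\<close>

type_synonym zpoly = "(nat \<Rightarrow>\<^sub>0 nat) \<Rightarrow>\<^sub>0 int"

definition Var :: "nat \<Rightarrow> zpoly" where
  "Var j = Poly_Mapping.single (Poly_Mapping.single j 1) 1"

definition vars :: "zpoly \<Rightarrow> nat set" where
  "vars p = (\<Union>(m::nat \<Rightarrow>\<^sub>0 nat)\<in>Poly_Mapping.keys p. Poly_Mapping.keys m)"

definition peval :: "(nat \<Rightarrow> 'a::comm_ring_1) \<Rightarrow> zpoly \<Rightarrow> 'a" where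
  "peval s p = (\<Sum>m\<in>Poly_Mapping.keys p. of_int (Poly_Mapping.lookup p m) * (\<Prod>v\<in>Poly_Mapping.keys m. s v ^ Poly_Mapping.lookup m v))"

definition homogeneous :: "nat \<Rightarrow> zpoly \<Rightarrow> bool" where
  "homogeneous d p \<longleftrightarrow> (\<forall>m\<in>Poly_Mapping.keys p. (\<Sum>v\<in>Poly_Mapping.keys m. Poly_Mapping.lookup m v) = d)"

definition exdiv :: "zpoly \<Rightarrow> zpoly \<Rightarrow> zpoly" where
  "exdiv g h = (THE q. g = h * q)"

text \<open>R_{i,m} f = f(x_1,...,x_{i-1},x_m,x_i,...,x_{m-1},x_{m+1},...): the k-th argument
slot receives x_{sigma k}.\<close>
definition Rim :: "nat \<Rightarrow> nat \<Rightarrow> zpoly \<Rightarrow> zpoly" where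
  "Rim i m f = peval (\<lambda>k. Var (if k < i then k else if k = i then m
                                 else if k \<le> m then k - 1 else k)) f"

definition Tim :: "nat \<Rightarrow> nat \<Rightarrow> zpoly \<Rightarrow> zpoly" where
  "Tim i m f = exdiv (Rim (i+1) m f - Rim i m f) (Var i - Var m)"

definition Ri :: "nat \<Rightarrow> zpoly \<Rightarrow> zpoly" where
  "Ri i f = peval (\<lambda>k. if k < i then Var k else if k = i then 0 else Var (k - 1)) f"

definition Ti :: "nat \<Rightarrow> zpoly \<Rightarrow> zpoly" where
  "Ti i f = exdiv (Ri (i+1) f - Ri i f) (Var i)"

definition Tsum :: "nat \<Rightarrow> zpoly \<Rightarrow> zpoly" where
  "Tsum m f = (\<Sum>i=1..<m. Tim i m f)"

definition Tsum0 :: "nat \<Rightarrow> zpoly \<Rightarrow> zpoly" where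
  "Tsum0 k f = (\<Sum>i=1..k. Ti i f)"

text \<open>The divided symmetrization <f>_n, as a rational function evaluated at a point
x with pairwise distinct coordinates x_1,...,x_n.\<close>
definition dsym :: "nat \<Rightarrow> zpoly \<Rightarrow> (nat \<Rightarrow> real) \<Rightarrow> real" where
  "dsym n f x = (\<Sum>\<sigma>\<in>{\<sigma>. \<sigma> permutes {1..n}}.
      peval (\<lambda>k. x (\<sigma> k)) f / (\<Prod>j\<in>{1..<n}. (x (\<sigma> j) - x (\<sigma> (j+1)))))"

end

theory Submission
  imports Defs
begin


definition mon :: "(nat \<Rightarrow> 'a::comm_ring_1) \<Rightarrow> (nat \<Rightarrow>\<^sub>0 nat) \<Rightarrow> 'a" where
  "mon s a = (\<Prod>v\<in>Poly_Mapping.keys a. s v ^ Poly_Mapping.lookup a v)"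

lemma peval_mon: "peval s p = (\<Sum>m\<in>Poly_Mapping.keys p. of_int (Poly_Mapping.lookup p m) * mon s m)"
  by (simp add: peval_def mon_def)

lemma mon_superset:
  assumes "finite S" "Poly_Mapping.keys a \<subseteq> S"
  shows "mon s a = (\<Prod>v\<in>S. s v ^ Poly_Mapping.lookup a v)"
  unfolding mon_def
  by (rule prod.mono_neutral_left) (use assms in \<open>auto simp: in_keys_iff\<close>)

lemma mon_add: "mon s (a + b) = mon s a * mon s b"
proof -
  let ?S = "Poly_Mapping.keys a \<union> Poly_Mapping.keys b"
  have "mon s (a + b) = (\<Prod>v\<in>?S. s v ^ Poly_Mapping.lookup (a+b) v)"
    by (rule mon_superset) (auto dest: set_mp[OF keys_add])
  also have "\<dots> = (\<Prod>v\<in>?S. s v ^ Poly_Mapping.lookup a v) * (\<Prod>v\<in>?S. s v ^ Poly_Mapping.lookup b v)"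
    by (simp add: lookup_add power_add prod.distrib)
  also have "\<dots> = mon s a * mon s b"
  proof -
    have "mon s a = (\<Prod>v\<in>?S. s v ^ Poly_Mapping.lookup a v)" by (rule mon_superset) auto
    moreover have "mon s b = (\<Prod>v\<in>?S. s v ^ Poly_Mapping.lookup b v)" by (rule mon_superset) auto
    ultimately show ?thesis by simp
  qed
  finally show ?thesis .
qed

lemma mon_zero [simp]: "mon s 0 = 1"
  by (simp add: mon_def)

lemma mon_single [simp]: "mon s (Poly_Mapping.single j k) = s j ^ k"
  by (simp add: mon_def)

lemma peval_add: "peval s (p + q) = peval s p + peval s q"
  unfolding peval_mon
  by (rule setsum_keys_plus_distrib) (auto simp: distrib_right)

lemma peval_zero [simp]: "peval s 0 = 0"
  by (simp add: peval_def)

lemma peval_uminus: "peval s (- p) = - peval s p"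
proof -
  have "peval s (- p) + peval s p = 0"
    by (metis add.left_inverse peval_add peval_zero)
  then show ?thesis by (simp add: eq_neg_iff_add_eq_0)
qed

lemma peval_diff: "peval s (p - q) = peval s p - peval s q"
  by (metis diff_conv_add_uminus peval_add peval_uminus)

lemma peval_single [simp]: "peval s (Poly_Mapping.single a c) = of_int c * mon s a"
  by (cases "c = 0") (simp_all add: peval_mon)

lemma peval_mult: "peval s (p * q) = peval s p * peval s q"
proof -
  have sing: "peval s (Poly_Mapping.single a 1 * q) = mon s a * peval s q" for a
    using subset_UNIV
  proof (induction q rule: frag_induction)
    case zero show ?case by simp
  next
    case (one x) show ?case by (simp add: mult_single mon_add)
  next
    case (diff a' b) then show ?case by (simp add: right_diff_distrib peval_diff)
  qed
  show ?thesis
    using subset_UNIV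
  proof (induction p rule: frag_induction)
    case zero show ?case by simp
  next
    case (one x) show ?case by (simp add: sing)
  next
    case (diff a' b) then show ?case by (simp add: left_diff_distrib peval_diff)
  qed
qed

lemma peval_one [simp]: "peval s 1 = 1"
proof -
  have "peval s (Poly_Mapping.single 0 1) = 1" by (simp del: single_one)
  then show ?thesis by simp
qed

lemma peval_of_int [simp]: "peval s (of_int c) = of_int c"
  by (simp flip: single_of_int)

lemma peval_Var [simp]: "peval s (Var j) = s j"
  by (simp add: Var_def)

lemma peval_sum: "peval s (sum g A) = (\<Sum>a\<in>A. peval s (g a))"
  by (induction A rule: infinite_finite_induct) (simp_all add: peval_add)

lemma peval_prod: "peval s (prod g A) = (\<Prod>a\<in>A. peval s (g a))"
  by (induction A rule: infinite_finite_induct) (simp_all add: peval_mult)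

lemma peval_power: "peval s (p ^ k) = peval s p ^ k"
  by (induction k) (simp_all add: peval_mult)

lemma peval_peval: "peval s (peval t f) = peval (\<lambda>k. peval s (t k)) f"
  by (simp only: peval_def[of t f] peval_def[of "\<lambda>k. peval s (t k)" f] peval_sum peval_mult peval_prod peval_power peval_of_int)

lemma peval_cong:
  assumes "\<And>v. v \<in> vars f \<Longrightarrow> s v = s' v"
  shows "peval s f = peval s' f"
proof -
  have "s v = s' v" if "m \<in> Poly_Mapping.keys f" "v \<in> Poly_Mapping.keys m" for m v
    using assms that by (auto simp: vars_def)
  then show ?thesis unfolding peval_def
    by (intro sum.cong refl arg_cong2[where f="(*)"] prod.cong) auto
qed

lemma sum_single_lookup: "(\<Sum>k\<in>Poly_Mapping.keys f. Poly_Mapping.single k (Poly_Mapping.lookup f k)) = f"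
  by (rule poly_mapping_eqI) (simp add: lookup_sum lookup_single when_def in_keys_iff)

lemma Var_power: "Var v ^ k = Poly_Mapping.single (Poly_Mapping.single v k) 1"
  by (induction k) (simp_all add: Var_def mult_single flip: single_add)

lemma prod_single: "finite A \<Longrightarrow> (\<Prod>v\<in>A. Poly_Mapping.single (g v) (1::int)) = Poly_Mapping.single (\<Sum>v\<in>A. g v) 1"
  by (induction A rule: finite_induct) (simp_all add: mult_single)

lemma mon_Var: "mon Var m = Poly_Mapping.single m 1"
  by (simp add: mon_def Var_power prod_single sum_single_lookup)

lemma peval_Var_id [simp]: "peval Var f = f"
  using subset_UNIV
proof (induction f rule: frag_induction)
  case zero show ?case by simp
next
  case (one x) show ?case by (simp add: mon_Var)
next
  case (diff a b) then show ?case by (simp add: peval_diff)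
qed



lemma dvd_prod_diff:
  fixes h :: "'a::comm_ring_1"
  assumes "\<And>i. i \<in> A \<Longrightarrow> h dvd (f i - g i)"
  shows "h dvd (prod f A - prod g A)"
  using assms
proof (induction A rule: infinite_finite_induct)
  case (insert a A)
  have "prod f (insert a A) - prod g (insert a A) = f a * (prod f A - prod g A) + (f a - g a) * prod g A"
    using insert by (simp add: algebra_simps)
  then show ?case using insert by (simp add: dvd_add dvd_mult dvd_mult2)
qed simp_all

lemma dvd_power_diff:
  fixes h :: "'a::comm_ring_1"
  assumes "h dvd (a - b)"
  shows "h dvd (a ^ k - b ^ k)"
  using dvd_prod_diff[of "{..<k}" h "\<lambda>_. a" "\<lambda>_. b"] assms by simp

lemma dvd_peval_diff:
  fixes h :: "'a::comm_ring_1"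
  assumes "\<And>k. h dvd (s1 k - s2 k)"
  shows "h dvd (peval s1 f - peval s2 f)"
proof -
  have "peval s1 f - peval s2 f = (\<Sum>m\<in>Poly_Mapping.keys f. of_int (Poly_Mapping.lookup f m) * (mon s1 m - mon s2 m))"
    by (simp add: peval_mon algebra_simps sum_subtractf)
  moreover have "h dvd (mon s1 m - mon s2 m)" for m
    unfolding mon_def by (intro dvd_prod_diff dvd_power_diff assms)
  ultimately show ?thesis by (simp add: dvd_sum dvd_mult)
qed

lemma exdiv_eq:
  assumes "h \<noteq> 0"
  shows "exdiv (h * q) h = q"
  unfolding exdiv_def using assms by (rule_tac the_equality) auto

lemma single_one_inj: "Poly_Mapping.single a (1::'b::zero_neq_one) = Poly_Mapping.single b 1 \<longleftrightarrow> a = b"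
  by (metis lookup_single_eq lookup_single_not_eq zero_neq_one)

lemma Var_inj [simp]: "Var i = Var j \<longleftrightarrow> i = j"
  using single_one_inj[of "Poly_Mapping.single i (1::nat)" "Poly_Mapping.single j 1", where 'b=int]
    single_one_inj[of i j, where 'b=nat] by (simp add: Var_def)

lemma Var_nz [simp]: "Var i \<noteq> 0"
  by (simp add: Var_def)

definition sig :: "nat \<Rightarrow> nat \<Rightarrow> nat \<Rightarrow> nat" where
  "sig i m k = (if k < i then k else if k = i then m else if k \<le> m then k - 1 else k)"

lemma Rim_sig: "Rim i m f = peval (\<lambda>k. Var (sig i m k)) f"
  unfolding Rim_def sig_def by (rule arg_cong2[where f=peval]) (auto simp: fun_eq_iff)

lemma Tim_eq:
  assumes "i < m"
  shows "(Var i - Var m) * Tim i m f = Rim (i+1) m f - Rim i m f"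
proof -
  let ?h = "Var i - Var m"
  have h: "?h \<noteq> 0" using assms by simp
  have "?h dvd (Var (sig (i+1) m k) - Var (sig i m k))" for k
  proof -
    consider "k < i" | "k = i" | "k = i + 1" | "k > i + 1" by linarith
    then show ?thesis
    proof cases
      case 2 then show ?thesis using assms by (simp add: sig_def)
    next
      case 3
      then have "Var (sig (i+1) m k) - Var (sig i m k) = - ?h" using assms by (simp add: sig_def)
      then show ?thesis by (metis dvd_minus_iff dvd_refl)
    qed (auto simp: sig_def)
  qed
  then have "?h dvd (Rim (i+1) m f - Rim i m f)"
    unfolding Rim_sig by (rule dvd_peval_diff)
  then obtain q where q: "Rim (i+1) m f - Rim i m f = ?h * q" by (elim dvdE)
  show ?thesis unfolding Tim_def q exdiv_eq[OF h] ..
qed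

lemma Ti_eq: "Var i * Ti i f = Ri (i+1) f - Ri i f"
proof -
  have "Var i dvd ((if k < i + 1 then Var k else if k = i + 1 then 0 else Var (k - 1))
                 - (if k < i then Var k else if k = i then 0 else Var (k - 1)))" for k
  proof -
    consider "k < i" | "k = i" | "k = i + 1" | "k > i + 1" by linarith
    then show ?thesis by cases auto
  qed
  then have "Var i dvd (Ri (i+1) f - Ri i f)"
    unfolding Ri_def by (rule dvd_peval_diff)
  then obtain q where q: "Ri (i+1) f - Ri i f = Var i * q" by (elim dvdE)
  show ?thesis unfolding Ti_def q exdiv_eq[OF Var_nz] ..
qed

lemma peval_Rim: "peval x (Rim i m f) = peval (\<lambda>k. x (sig i m k)) f"
  by (simp add: Rim_sig peval_peval)

lemma peval_Tim:
  fixes x :: "nat \<Rightarrow> real"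
  assumes "i < m" "x i \<noteq> x m"
  shows "peval x (Tim i m f) = (peval (\<lambda>k. x (sig (i+1) m k)) f - peval (\<lambda>k. x (sig i m k)) f) / (x i - x m)"
proof -
  have "peval x ((Var i - Var m) * Tim i m f) = peval x (Rim (i+1) m f - Rim i m f)"
    using Tim_eq[OF assms(1)] by simp
  then have "(x i - x m) * peval x (Tim i m f) = peval (\<lambda>k. x (sig (i+1) m k)) f - peval (\<lambda>k. x (sig i m k)) f"
    by (simp add: peval_mult peval_diff peval_Rim)
  then show ?thesis using assms(2) by (simp add: field_simps)
qed



definition sinv :: "nat \<Rightarrow> nat \<Rightarrow> nat \<Rightarrow> nat" where
  "sinv p n k = (if k < p then k else if k = n then p else if k < n then k + 1 else k)"

lemma sig_sinv: "1 \<le> p \<Longrightarrow> p \<le> n \<Longrightarrow> sig p n (sinv p n k) = k"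
  by (auto simp: sig_def sinv_def)

lemma sinv_sig: "1 \<le> p \<Longrightarrow> p \<le> n \<Longrightarrow> sinv p n (sig p n k) = k"
  by (auto simp: sig_def sinv_def)

lemma sig_permutes: assumes "1 \<le> p" "p \<le> n" shows "sig p n permutes {1..n}"
proof (rule bij_imp_permutes)
  show "bij_betw (sig p n) {1..n} {1..n}"
    by (rule bij_betw_byWitness[where f'="sinv p n"]) (use assms in \<open>auto simp: sig_sinv sinv_sig, auto simp: sig_def sinv_def\<close>)
qed (use assms in \<open>auto simp: sig_def\<close>)

lemma sinv_permutes: assumes "1 \<le> p" "p \<le> n" shows "sinv p n permutes {1..n}"
proof (rule bij_imp_permutes)
  show "bij_betw (sinv p n) {1..n} {1..n}"
    by (rule bij_betw_byWitness[where f'="sig p n"]) (use assms in \<open>auto simp: sig_sinv sinv_sig, auto simp: sig_def sinv_def\<close>)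
qed (use assms in \<open>auto simp: sinv_def\<close>)

lemma perm_bij:
  assumes "n \<ge> 1"
  shows "bij_betw (\<lambda>(p, \<tau>). \<tau> \<circ> sig p n) ({1..n} \<times> {\<tau>. \<tau> permutes {1..n-1}}) {\<sigma>. \<sigma> permutes {1..n}}"
proof (rule bij_betw_byWitness[where f'="\<lambda>\<sigma>. (inv \<sigma> n, \<sigma> \<circ> sinv (inv \<sigma> n) n)"])
  have sub: "{1..n-1} \<subseteq> {1..n}" by auto
  show "\<forall>a\<in>{1..n} \<times> {\<tau>. \<tau> permutes {1..n - 1}}.
          (\<lambda>\<sigma>. (inv \<sigma> n, \<sigma> \<circ> sinv (inv \<sigma> n) n)) ((\<lambda>(p, \<tau>). \<tau> \<circ> sig p n) a) = a"
  proof safe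
    fix p \<tau> assume p: "p \<in> {1..n}" and \<tau>: "\<tau> permutes {1..n-1}"
    have \<sigma>: "\<tau> \<circ> sig p n permutes {1..n}"
      using p by (intro permutes_compose sig_permutes permutes_subset[OF \<tau> sub]) auto
    have tn: "\<tau> n = n" by (rule permutes_not_in[OF \<tau>]) (use p in auto)
    have "(\<tau> \<circ> sig p n) p = n" using p tn by (simp add: sig_def)
    then have ip: "inv (\<tau> \<circ> sig p n) n = p" using permutes_inv_eq[OF \<sigma>] by simp
    show "inv (\<tau> \<circ> sig p n) n = p" by (rule ip)
    show "\<tau> \<circ> sig p n \<circ> sinv (inv (\<tau> \<circ> sig p n) n) n = \<tau>"
      unfolding ip using p by (auto simp: fun_eq_iff sig_sinv)
  qed
  show "\<forall>a'\<in>{\<sigma>. \<sigma> permutes {1..n}}.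
          (\<lambda>(p, \<tau>). \<tau> \<circ> sig p n) ((\<lambda>\<sigma>. (inv \<sigma> n, \<sigma> \<circ> sinv (inv \<sigma> n) n)) a') = a'"
  proof
    fix \<sigma> assume "\<sigma> \<in> {\<sigma>. \<sigma> permutes {1..n}}"
    then have \<sigma>: "\<sigma> permutes {1..n}" by simp
    have "inv \<sigma> n \<in> {1..n}" using assms permutes_in_image[OF permutes_inv[OF \<sigma>]] by auto
    then show "(\<lambda>(p, \<tau>). \<tau> \<circ> sig p n) ((\<lambda>\<sigma>. (inv \<sigma> n, \<sigma> \<circ> sinv (inv \<sigma> n) n)) \<sigma>) = \<sigma>"
      by (auto simp: fun_eq_iff sinv_sig)
  qed
  show "(\<lambda>(p, \<tau>). \<tau> \<circ> sig p n) ` ({1..n} \<times> {\<tau>. \<tau> permutes {1..n - 1}}) \<subseteq> {\<sigma>. \<sigma> permutes {1..n}}"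
  proof safe
    fix p \<tau> assume p: "p \<in> {1..n}" and \<tau>: "\<tau> permutes {1..n-1}"
    show "\<tau> \<circ> sig p n permutes {1..n}"
      using p by (intro permutes_compose sig_permutes permutes_subset[OF \<tau> sub]) auto
  qed
  show "(\<lambda>\<sigma>. (inv \<sigma> n, \<sigma> \<circ> sinv (inv \<sigma> n) n)) ` {\<sigma>. \<sigma> permutes {1..n}} \<subseteq> {1..n} \<times> {\<tau>. \<tau> permutes {1..n - 1}}"
  proof -
    have "inv \<sigma> n \<in> {1..n} \<and> \<sigma> \<circ> sinv (inv \<sigma> n) n permutes {1..n - 1}" if \<sigma>: "\<sigma> permutes {1..n}" for \<sigma>
    proof
      show ip: "inv \<sigma> n \<in> {1..n}" using assms permutes_in_image[OF permutes_inv[OF \<sigma>]] by auto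
      have c: "\<sigma> \<circ> sinv (inv \<sigma> n) n permutes {1..n}"
        using ip by (intro permutes_compose sinv_permutes \<sigma>) auto
      have "(\<sigma> \<circ> sinv (inv \<sigma> n) n) n = n"
        using permutes_inverses(1)[OF \<sigma>] ip by (simp add: sinv_def)
      then show "\<sigma> \<circ> sinv (inv \<sigma> n) n permutes {1..n - 1}"
      proof (intro permutes_superset[OF c])
        fix x assume "(\<sigma> \<circ> sinv (inv \<sigma> n) n) n = n" "x \<in> {1..n} - {1..n-1}"
        then show "(\<sigma> \<circ> sinv (inv \<sigma> n) n) x = x" by (cases "x = n") auto
      qed
    qed
    then show ?thesis by auto
  qed
qed



lemma sum_by_parts:
  fixes A b :: "nat \<Rightarrow> real"
  assumes "n \<ge> 1"
  shows "(\<Sum>p\<in>{1..n}. A p * (b (p-1) - b p)) = (\<Sum>i\<in>{1..<n}. (A (i+1) - A i) * b i) + A 1 * b 0 - A n * b n"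
  using assms
proof (induction n)
  case 0 then show ?case by simp
next
  case (Suc n)
  show ?case
  proof (cases "n = 0")
    case True then show ?thesis by (simp add: algebra_simps)
  next
    case False
    then have IH: "(\<Sum>p\<in>{1..n}. A p * (b (p-1) - b p)) = (\<Sum>i\<in>{1..<n}. (A (i+1) - A i) * b i) + A 1 * b 0 - A n * b n"
      using Suc by simp
    have "(\<Sum>p\<in>{1..Suc n}. A p * (b (p-1) - b p)) = (\<Sum>p\<in>{1..n}. A p * (b (p-1) - b p)) + A (Suc n) * (b n - b (Suc n))"
      by (simp add: sum.cl_ivl_Suc)
    moreover have "(\<Sum>i\<in>{1..<Suc n}. (A (i+1) - A i) * b i) = (\<Sum>i\<in>{1..<n}. (A (i+1) - A i) * b i) + (A (Suc n) - A n) * b n"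
      using False by (simp add: sum.atLeastLessThan_Suc)
    ultimately show ?thesis using IH by (simp add: algebra_simps)
  qed
qed

lemma aux_frac0:
  fixes L R u v t :: real
  assumes "L \<noteq> 0" "R \<noteq> 0" "u \<noteq> 0" "v \<noteq> 0" "t \<noteq> 0" "t = u - v"
  shows "1 / (L * u * (- v) * R) = 1 / (u * (L * t * R)) - 1 / (v * (L * t * R))"
proof -
  have "1 / (u * (L * t * R)) - 1 / (v * (L * t * R)) = (v - u) / (u * v * (L * t * R))"
    using assms(1-5) by (simp add: field_simps)
  also have "\<dots> = - t / (u * v * (L * t * R))" using assms(6) by simp
  also have "\<dots> = - 1 / (u * v * L * R)" using assms(1-5)
    by (simp add: field_simps)
  finally show ?thesis using assms by (simp add: field_simps)
qed

lemma aux_frac: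
  fixes L R a c w :: real
  assumes "L \<noteq> 0" "R \<noteq> 0" "a \<noteq> w" "c \<noteq> w" "a \<noteq> c"
  shows "1 / (L * (a - w) * (w - c) * R) = 1 / ((a - w) * (L * (a - c) * R)) - 1 / ((c - w) * (L * (a - c) * R))"
proof -
  have *: "1 / (L * (a-w) * (- (c-w)) * R) = 1/((a-w)*(L*(a-c)*R)) - 1/((c-w)*(L*(a-c)*R))"
    by (rule aux_frac0) (use assms in auto)
  have eq: "w - c = - (c - w)" by simp
  show ?thesis unfolding eq by (rule *)
qed

definition dd :: "(nat \<Rightarrow> real) \<Rightarrow> nat \<Rightarrow> real" where "dd y j = y j - y (j+1)"

definition Dp :: "(nat \<Rightarrow> real) \<Rightarrow> nat \<Rightarrow> nat \<Rightarrow> real" where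
  "Dp y n p = (\<Prod>j\<in>{1..<n}. y (sig p n j) - y (sig p n (j+1)))"

lemma Dp_split:
  assumes "1 \<le> p" "p \<le> n"
  shows "Dp y n p = (\<Prod>j\<in>{1..<p-1}. dd y j) * (if p \<ge> 2 then y (p-1) - y n else 1)
                    * (if p < n then y n - y p else 1) * (\<Prod>j\<in>{p..<n-1}. dd y j)"
proof -
  let ?e = "\<lambda>j. y (sig p n j) - y (sig p n (j+1))"
  have "Dp y n p = prod ?e {1..<p} * prod ?e {p..<n}"
    unfolding Dp_def using assms by (simp add: prod.atLeastLessThan_concat)
  moreover have "prod ?e {1..<p} = (\<Prod>j\<in>{1..<p-1}. dd y j) * (if p \<ge> 2 then y (p-1) - y n else 1)"
  proof (cases "p \<ge> 2")
    case True
    then have "prod ?e {1..<p} = prod ?e {1..<p-1} * ?e (p-1)"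
      using prod.atLeastLessThan_Suc[of 1 "p-1" ?e] by (simp add: Suc_diff_Suc numeral_2_eq_2)
    moreover have "prod ?e {1..<p-1} = (\<Prod>j\<in>{1..<p-1}. dd y j)"
      by (rule prod.cong) (auto simp: sig_def dd_def)
    moreover have "?e (p-1) = y (p-1) - y n" using True by (simp add: sig_def)
    ultimately show ?thesis using True by simp
  next
    case False
    then have "p = 1" using assms by simp
    then show ?thesis by simp
  qed
  moreover have "prod ?e {p..<n} = (if p < n then y n - y p else 1) * (\<Prod>j\<in>{p..<n-1}. dd y j)"
  proof (cases "p < n")
    case True
    then have "prod ?e {p..<n} = ?e p * prod ?e {p+1..<(n-1)+1}"
      by (simp add: prod.atLeast_Suc_lessThan)
    also have "prod ?e {p+1..<(n-1)+1} = (\<Prod>i\<in>{p..<n-1}. ?e (i+1))"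
      by (rule prod.shift_bounds_nat_ivl)
    also have "\<dots> = (\<Prod>j\<in>{p..<n-1}. dd y j)"
      by (rule prod.cong) (auto simp: sig_def dd_def)
    also have "?e p = y n - y p" using True assms by (simp add: sig_def)
    finally show ?thesis using True by simp
  next
    case False
    then show ?thesis using assms by simp
  qed
  ultimately show ?thesis by simp
qed

lemma insert_identity:
  fixes y A :: "nat \<Rightarrow> real"
  assumes n: "n \<ge> 2" and inj: "inj_on y {1..n}"
  shows "(\<Sum>p\<in>{1..n}. A p / Dp y n p)
       = (\<Sum>i\<in>{1..<n}. (A (i+1) - A i) / (y i - y n)) / (\<Prod>j\<in>{1..<n-1}. dd y j)"
proof -
  define D where "D = (\<Prod>j\<in>{1..<n-1}. dd y j)"
  have ne: "y i \<noteq> y j" if "i \<in> {1..n}" "j \<in> {1..n}" "i \<noteq> j" for i j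
    using inj that by (auto dest: inj_onD)
  have ddnz: "dd y j \<noteq> 0" if "1 \<le> j" "j < n" for j
    using ne[of j "j+1"] that by (auto simp: dd_def)
  have prodnz: "(\<Prod>j\<in>{a..<b}. dd y j) \<noteq> 0" if "1 \<le> a" "b \<le> n" for a b
    using that ddnz by (auto simp: prod_zero_iff)
  have Dnz: "D \<noteq> 0" unfolding D_def using n by (intro prodnz) auto
  define b where "b i = (if 1 \<le> i \<and> i < n then 1 / ((y i - y n) * D) else 0)" for i
  have key: "1 / Dp y n p = b (p-1) - b p" if p: "p \<in> {1..n}" for p
  proof -
    consider "p = 1" | "2 \<le> p" "p < n" | "p = n" using p n by force
    then show ?thesis
    proof cases
      case 1
      have Dp1: "Dp y n p = (y n - y 1) * D"
        using 1 n by (simp add: Dp_split D_def)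
      have "y n - y 1 \<noteq> 0" "y 1 - y n \<noteq> 0" using ne[of n 1] n by auto
      then show ?thesis unfolding Dp1 using 1 n Dnz by (simp add: b_def field_simps)
    next
      case 2
      let ?L = "\<Prod>j\<in>{1..<p-1}. dd y j" and ?R = "\<Prod>j\<in>{p..<n-1}. dd y j"
      have Dp: "Dp y n p = ?L * (y (p-1) - y n) * (y n - y p) * ?R"
        using 2 by (simp add: Dp_split)
      have "D = (\<Prod>j\<in>{1..<Suc (p-1)}. dd y j) * ?R"
        unfolding D_def using 2 by (subst prod.atLeastLessThan_concat[symmetric]) auto
      also have "(\<Prod>j\<in>{1..<Suc (p-1)}. dd y j) = ?L * dd y (p-1)"
        using 2 by (subst prod.atLeastLessThan_Suc) auto
      finally have D: "D = ?L * dd y (p-1) * ?R" .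
      have nz1: "?L \<noteq> 0" "?R \<noteq> 0" by (rule prodnz; use 2 n in auto)+
      have "y (p-1) \<noteq> y n" "y p \<noteq> y n" by (rule ne; use 2 in auto)+
      then have nz: "?L \<noteq> 0" "?R \<noteq> 0" "y (p-1) - y n \<noteq> 0" "y n - y p \<noteq> 0" "y p - y n \<noteq> 0"
        using nz1 by auto
      have bp1: "b (p-1) = 1 / ((y (p-1) - y n) * D)" and bp: "b p = 1 / ((y p - y n) * D)"
        using 2 by (auto simp: b_def)
      have ddp: "dd y (p-1) = y (p-1) - y p" using 2 by (simp add: dd_def)
      have "y (p-1) \<noteq> y p" by (rule ne; use 2 in auto)
      then show ?thesis unfolding Dp bp1 bp D ddp using nz
        by (intro aux_frac) auto
    next
      case 3
      have Dp3: "Dp y n p = D * (y (n-1) - y n)"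
        using 3 n by (simp add: Dp_split D_def)
      have "y (n-1) - y n \<noteq> 0" using ne[of "n-1" n] n by auto
      then show ?thesis unfolding Dp3 using 3 n Dnz by (simp add: b_def field_simps)
    qed
  qed
  have "(\<Sum>p\<in>{1..n}. A p / Dp y n p) = (\<Sum>p\<in>{1..n}. A p * (b (p-1) - b p))"
  proof (rule sum.cong)
    fix p assume p: "p \<in> {1..n}"
    have "A p / Dp y n p = A p * (1 / Dp y n p)" by simp
    then show "A p / Dp y n p = A p * (b (p-1) - b p)" using key[OF p] by simp
  qed simp
  also have "\<dots> = (\<Sum>i\<in>{1..<n}. (A (i+1) - A i) * b i) + A 1 * b 0 - A n * b n"
    using n by (intro sum_by_parts) auto
  also have "\<dots> = (\<Sum>i\<in>{1..<n}. (A (i+1) - A i) / (y i - y n) / D)"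
    by (simp add: b_def)
  also have "\<dots> = (\<Sum>i\<in>{1..<n}. (A (i+1) - A i) / (y i - y n)) / D"
    by (simp add: sum_divide_distrib)
  finally show ?thesis unfolding D_def .
qed



definition DS :: "nat \<Rightarrow> ((nat \<Rightarrow> real) \<Rightarrow> real) \<Rightarrow> (nat \<Rightarrow> real) \<Rightarrow> real" where
  "DS n F x = (\<Sum>\<sigma>\<in>{\<sigma>. \<sigma> permutes {1..n}}. F (\<lambda>k. x (\<sigma> k)) / (\<Prod>j\<in>{1..<n}. (x (\<sigma> j) - x (\<sigma> (j+1)))))"

lemma dsym_DS: "dsym n f x = DS n (\<lambda>y. peval y f) x"
  by (simp add: dsym_def DS_def)

definition TS :: "nat \<Rightarrow> ((nat \<Rightarrow> real) \<Rightarrow> real) \<Rightarrow> (nat \<Rightarrow> real) \<Rightarrow> real" where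
  "TS m F y = (\<Sum>i\<in>{1..<m}. (F (\<lambda>k. y (sig (i+1) m k)) - F (\<lambda>k. y (sig i m k))) / (y i - y m))"

lemma peval_Tsum:
  fixes y :: "nat \<Rightarrow> real"
  assumes "\<And>i. i \<in> {1..<m} \<Longrightarrow> y i \<noteq> y m"
  shows "peval y (Tsum m f) = TS m (\<lambda>z. peval z f) y"
  unfolding Tsum_def TS_def peval_sum
  by (rule sum.cong) (use assms in \<open>auto simp: peval_Tim\<close>)

lemma DS_cong:
  assumes "\<And>\<tau>. \<tau> permutes {1..n} \<Longrightarrow> F (\<lambda>k. x (\<tau> k)) = G (\<lambda>k. x (\<tau> k))"
  shows "DS n F x = DS n G x"
  unfolding DS_def by (rule sum.cong) (use assms in auto)

lemma DS_step:
  assumes n: "n \<ge> 2" and inj: "inj_on x {1..n}"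
  shows "DS n F x = DS (n-1) (TS n F) x"
proof -
  let ?P = "\<lambda>k. {\<sigma>. \<sigma> permutes {1..k}}"
  define g where "g \<sigma> = F (\<lambda>k. x (\<sigma> k)) / (\<Prod>j\<in>{1..<n}. (x (\<sigma> j) - x (\<sigma> (j+1))))" for \<sigma>
  have "DS n F x = sum g (?P n)" unfolding DS_def g_def ..
  also have "\<dots> = (\<Sum>a\<in>{1..n} \<times> ?P (n-1). g ((\<lambda>(p, \<tau>). \<tau> \<circ> sig p n) a))"
    using n by (intro sum.reindex_bij_betw[symmetric] perm_bij) auto
  also have "\<dots> = (\<Sum>p\<in>{1..n}. \<Sum>\<tau>\<in>?P (n-1). g (\<tau> \<circ> sig p n))"
    by (subst sum.cartesian_product) (auto intro!: sum.cong split: prod.splits)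
  also have "\<dots> = (\<Sum>\<tau>\<in>?P (n-1). \<Sum>p\<in>{1..n}. g (\<tau> \<circ> sig p n))"
    by (rule sum.swap)
  also have "\<dots> = (\<Sum>\<tau>\<in>?P (n-1). TS n F (\<lambda>k. x (\<tau> k)) / (\<Prod>j\<in>{1..<n-1}. (x (\<tau> j) - x (\<tau> (j+1)))))"
  proof (rule sum.cong)
    fix \<tau> assume "\<tau> \<in> ?P (n-1)"
    then have \<tau>: "\<tau> permutes {1..n-1}" by simp
    then have \<tau>n: "\<tau> permutes {1..n}" by (rule permutes_subset) auto
    define y where "y = (\<lambda>k. x (\<tau> k))"
    have injy: "inj_on y {1..n}"
    proof -
      have "inj_on (x \<circ> \<tau>) {1..n}"
        using inj permutes_inj_on[OF \<tau>n] permutes_image[OF \<tau>n] by (intro comp_inj_on) auto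
      then show ?thesis by (simp add: y_def o_def)
    qed
    have "(\<Sum>p\<in>{1..n}. g (\<tau> \<circ> sig p n)) = (\<Sum>p\<in>{1..n}. F (\<lambda>k. y (sig p n k)) / Dp y n p)"
      by (simp add: g_def Dp_def y_def)
    also have "\<dots> = (\<Sum>i\<in>{1..<n}. (F (\<lambda>k. y (sig (i+1) n k)) - F (\<lambda>k. y (sig i n k))) / (y i - y n))
                    / (\<Prod>j\<in>{1..<n-1}. dd y j)"
      by (rule insert_identity[OF n injy])
    also have "\<dots> = TS n F (\<lambda>k. x (\<tau> k)) / (\<Prod>j\<in>{1..<n-1}. (x (\<tau> j) - x (\<tau> (j+1))))"
      by (simp add: TS_def dd_def y_def)
    finally show "(\<Sum>p\<in>{1..n}. g (\<tau> \<circ> sig p n)) = TS n F (\<lambda>k. x (\<tau> k)) / (\<Prod>j\<in>{1..<n-1}. (x (\<tau> j) - x (\<tau> (j+1))))" .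
  qed simp
  also have "\<dots> = DS (n-1) (TS n F) x" unfolding DS_def ..
  finally show ?thesis .
qed

lemma perms_le1:
  fixes n :: nat
  assumes "n \<le> 1" shows "{\<sigma>. \<sigma> permutes {1..n}} = {id}"
proof -
  have "n = 0 \<or> n = 1" using assms by arith
  then show ?thesis by (elim disjE) (simp_all add: permutes_empty permutes_sing)
qed

theorem part1:
  fixes x :: "nat \<Rightarrow> real"
  assumes "inj_on x {1..n}"
  shows "dsym n f x = peval x (foldr Tsum [2..<n+1] f)"
  using assms
proof (induction n arbitrary: f)
  case 0 then show ?case by (simp add: dsym_def perms_le1)
next
  case (Suc m)
  show ?case
  proof (cases "m = 0")
    case True then show ?thesis by (simp add: dsym_def perms_le1)
  next
    case False
    have injm: "inj_on x {1..m}" using Suc.prems by (rule inj_on_subset) auto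
    have "dsym (Suc m) f x = DS (Suc m) (\<lambda>y. peval y f) x" by (rule dsym_DS)
    also have "\<dots> = DS m (TS (Suc m) (\<lambda>y. peval y f)) x"
      using DS_step[of "Suc m" x] Suc.prems False by simp
    also have "\<dots> = DS m (\<lambda>y. peval y (Tsum (Suc m) f)) x"
    proof (rule DS_cong)
      fix \<tau> assume \<tau>: "\<tau> permutes {1..m}"
      have "x (\<tau> i) \<noteq> x (Suc m)" if "i \<in> {1..<Suc m}" for i
      proof -
        have "\<tau> i \<in> {1..m}" using permutes_in_image[OF \<tau>] that by auto
        then show ?thesis using Suc.prems by (auto dest: inj_onD)
      qed
      moreover have "\<tau> (Suc m) = Suc m" by (rule permutes_not_in[OF \<tau>]) auto
      ultimately show "TS (Suc m) (\<lambda>y. peval y f) (\<lambda>k. x (\<tau> k)) = peval (\<lambda>k. x (\<tau> k)) (Tsum (Suc m) f)"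
        by (intro peval_Tsum[symmetric]) auto
    qed
    also have "\<dots> = dsym m (Tsum (Suc m) f) x" by (rule dsym_DS[symmetric])
    also have "\<dots> = peval x (foldr Tsum [2..<m+1] (Tsum (Suc m) f))" by (rule Suc.IH[OF injm])
    also have "\<dots> = peval x (foldr Tsum [2..<Suc m+1] f)"
      using False by simp
    finally show ?thesis .
  qed
qed



lemma vars_add: "vars (p + q) \<subseteq> vars p \<union> vars q"
  unfolding vars_def using keys_add by fastforce

lemma vars_uminus [simp]: "vars (- p) = vars p"
  by (simp add: vars_def)

lemma vars_diff: "vars (p - q) \<subseteq> vars p \<union> vars q"
  using vars_add[of p "- q"] by simp

lemma vars_mult: "vars (p * q) \<subseteq> vars p \<union> vars q"
proof
  fix v assume "v \<in> vars (p * q)"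
  then obtain m where m: "m \<in> Poly_Mapping.keys (p * q)" "v \<in> Poly_Mapping.keys m" by (auto simp: vars_def)
  then obtain a b where "m = a + b" "a \<in> Poly_Mapping.keys p" "b \<in> Poly_Mapping.keys q"
    using keys_mult by blast
  then show "v \<in> vars p \<union> vars q" using m(2) keys_add[of a b] by (auto simp: vars_def)
qed

lemma vars_zero [simp]: "vars 0 = {}"
  by (simp add: vars_def)

lemma vars_of_int [simp]: "vars (of_int c) = {}"
  by (simp add: vars_def flip: single_of_int)

lemma vars_one [simp]: "vars 1 = {}"
  using vars_of_int[of 1] by simp

lemma vars_Var [simp]: "vars (Var k) = {k}"
  by (simp add: vars_def Var_def)

lemma vars_sum: "vars (sum g A) \<subseteq> (\<Union>a\<in>A. vars (g a))"
proof (induction A rule: infinite_finite_induct)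
  case (insert a A) then show ?case using vars_add[of "g a" "sum g A"] by auto
qed simp_all

lemma vars_prod: "vars (prod g A) \<subseteq> (\<Union>a\<in>A. vars (g a))"
proof (induction A rule: infinite_finite_induct)
  case (insert a A) then show ?case using vars_mult[of "g a" "prod g A"] by auto
qed simp_all

lemma vars_power: "vars (p ^ k) \<subseteq> vars p"
  using vars_prod[of "\<lambda>_. p" "{..<k}"] by (auto split: if_splits)

lemma vars_peval: "vars (peval t f) \<subseteq> (\<Union>v\<in>vars f. vars (t v))"
proof -
  have "vars (peval t f) \<subseteq> (\<Union>m\<in>Poly_Mapping.keys f. vars (of_int (Poly_Mapping.lookup f m) * (\<Prod>v\<in>Poly_Mapping.keys m. t v ^ Poly_Mapping.lookup m v)))"
    unfolding peval_def by (rule vars_sum)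
  also have "\<dots> \<subseteq> (\<Union>v\<in>vars f. vars (t v))"
  proof (rule UN_least)
    fix m assume m: "m \<in> Poly_Mapping.keys f"
    have "vars (of_int (Poly_Mapping.lookup f m) * (\<Prod>v\<in>Poly_Mapping.keys m. t v ^ Poly_Mapping.lookup m v))
          \<subseteq> vars (\<Prod>v\<in>Poly_Mapping.keys m. t v ^ Poly_Mapping.lookup m v)"
      using vars_mult by fastforce
    also have "\<dots> \<subseteq> (\<Union>v\<in>Poly_Mapping.keys m. vars (t v ^ Poly_Mapping.lookup m v))" by (rule vars_prod)
    also have "\<dots> \<subseteq> (\<Union>v\<in>Poly_Mapping.keys m. vars (t v))" using vars_power by blast
    also have "\<dots> \<subseteq> (\<Union>v\<in>vars f. vars (t v))" using m by (auto simp: vars_def)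
    finally show "vars (of_int (Poly_Mapping.lookup f m) * (\<Prod>v\<in>Poly_Mapping.keys m. t v ^ Poly_Mapping.lookup m v))
          \<subseteq> (\<Union>v\<in>vars f. vars (t v))" .
  qed
  finally show ?thesis .
qed

lemma vars_quot:
  assumes eq: "Var i * q = d" and d: "vars d \<subseteq> S" and i: "i \<in> S"
  shows "vars q \<subseteq> S"
proof -
  define \<phi> where "\<phi> = (\<lambda>k. if k \<in> S then Var k else (0::zpoly))"
  have "peval \<phi> d = peval Var d" by (rule peval_cong) (use d in \<open>auto simp: \<phi>_def\<close>)
  then have "peval \<phi> d = d" by simp
  then have "Var i * peval \<phi> q = Var i * q"
    using eq i by (auto simp: peval_mult \<phi>_def)
  then have "peval \<phi> q = q" by simp
  moreover have "vars (peval \<phi> q) \<subseteq> S" using vars_peval[of \<phi> q] by (auto simp: \<phi>_def split: if_splits)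
  ultimately show ?thesis by simp
qed

lemma vars_Ri:
  assumes "vars f \<subseteq> {1..m}" "1 \<le> j" "j \<le> m"
  shows "vars (Ri j f) \<subseteq> {1..m-1}"
proof -
  have "vars (Ri j f) \<subseteq> (\<Union>k\<in>vars f. vars (if k < j then Var k else if k = j then 0 else Var (k - 1)))"
    unfolding Ri_def by (rule vars_peval)
  also have "\<dots> \<subseteq> {1..m-1}" using assms(2,3) by (auto split: if_splits dest!: subsetD[OF assms(1)])
  finally show ?thesis .
qed

lemma vars_Ti:
  assumes "vars f \<subseteq> {1..m}" "1 \<le> i" "i < m"
  shows "vars (Ti i f) \<subseteq> {1..m-1}"
proof (rule vars_quot[OF Ti_eq])
  show "vars (Ri (i + 1) f - Ri i f) \<subseteq> {1..m - 1}"
    using vars_diff[of "Ri (i+1) f" "Ri i f"] vars_Ri[OF assms(1), of i] vars_Ri[OF assms(1), of "i+1"] assms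
    by auto
qed (use assms in auto)

lemma vars_Tsum0:
  assumes "vars f \<subseteq> {1..m}"
  shows "vars (Tsum0 (m-1) f) \<subseteq> {1..m-1}"
  unfolding Tsum0_def using vars_sum[of "\<lambda>i. Ti i f" "{1..m-1}"] vars_Ti[OF assms] by fastforce



definition zs :: "nat \<Rightarrow> nat \<Rightarrow> zpoly" where "zs m k = (if k = m then 0 else Var k)"
definition Zs :: "nat \<Rightarrow> nat \<Rightarrow> zpoly" where "Zs m k = (if 2 \<le> k \<and> k \<le> m then 0 else Var k)"

lemma peval_zs_Rim:
  assumes "vars g \<subseteq> {1..m}" "1 \<le> j" "j \<le> m"
  shows "peval (zs m) (Rim j m g) = Ri j g"
  unfolding Rim_sig peval_peval Ri_def peval_Var
  by (rule peval_cong) (use assms in \<open>auto simp: zs_def sig_def\<close>)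

lemma phi_Tim:
  assumes "vars g \<subseteq> {1..m}" "1 \<le> i" "i < m"
  shows "peval (zs m) (Tim i m g) = Ti i g"
proof -
  have "peval (zs m) ((Var i - Var m) * Tim i m g) = peval (zs m) (Rim (i+1) m g - Rim i m g)"
    using Tim_eq[OF assms(3)] by simp
  then have "Var i * peval (zs m) (Tim i m g) = Ri (i+1) g - Ri i g"
    using assms by (simp add: peval_mult peval_diff peval_zs_Rim zs_def)
  also have "\<dots> = Var i * Ti i g" by (rule Ti_eq[symmetric])
  finally show ?thesis by simp
qed

lemma ivl_eq: "{1..<m} = {1..m-1::nat}"
  by auto

lemma phi_Tsum:
  assumes "vars g \<subseteq> {1..m}"
  shows "peval (zs m) (Tsum m g) = Tsum0 (m-1) g"
  unfolding Tsum_def Tsum0_def peval_sum ivl_eq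
  by (rule sum.cong) (use assms in \<open>auto intro!: phi_Tim\<close>)

lemma zs_Rim_comm:
  assumes "j \<le> m" "m < n"
  shows "peval (zs n) (Rim j m g) = Rim j m (peval (zs n) g)"
  unfolding Rim_sig peval_peval
  by (rule arg_cong2[where f=peval]) (use assms in \<open>auto simp: fun_eq_iff zs_def sig_def\<close>)

lemma phi_comm_Tim:
  assumes "i < m" "m < n"
  shows "peval (zs n) (Tim i m g) = Tim i m (peval (zs n) g)"
proof -
  have "peval (zs n) ((Var i - Var m) * Tim i m g) = peval (zs n) (Rim (i+1) m g - Rim i m g)"
    using Tim_eq[OF assms(1)] by simp
  then have "(Var i - Var m) * peval (zs n) (Tim i m g) = Rim (i+1) m (peval (zs n) g) - Rim i m (peval (zs n) g)"
    using assms by (simp add: peval_mult peval_diff zs_Rim_comm zs_def)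
  also have "\<dots> = (Var i - Var m) * Tim i m (peval (zs n) g)" by (rule Tim_eq[OF assms(1), symmetric])
  finally show ?thesis using assms by simp
qed

lemma phi_comm_foldr:
  assumes "\<forall>m\<in>set ms. m < n"
  shows "peval (zs n) (foldr Tsum ms g) = foldr Tsum ms (peval (zs n) g)"
  using assms
proof (induction ms)
  case (Cons m ms)
  then show ?case
    by (simp add: Tsum_def peval_sum phi_comm_Tim)
qed simp

lemma Zs_step:
  assumes "1 \<le> m"
  shows "peval (Zs m) (peval (zs (Suc m)) h) = peval (Zs (Suc m)) h"
  unfolding peval_peval
  by (rule arg_cong2[where f=peval]) (use assms in \<open>auto simp: fun_eq_iff zs_def Zs_def\<close>)

lemma chainC:
  assumes "1 \<le> m" "vars g \<subseteq> {1..m}"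
  shows "peval (Zs m) (foldr Tsum [2..<m+1] g) = foldr Tsum0 [1..<m] g"
  using assms
proof (induction m arbitrary: g)
  case 0 then show ?case by simp
next
  case (Suc m)
  show ?case
  proof (cases "m = 0")
    case True
    have "Zs 1 = Var" by (auto simp: fun_eq_iff Zs_def)
    then show ?thesis using True by simp
  next
    case False
    have "peval (Zs (Suc m)) (foldr Tsum [2..<Suc m+1] g)
        = peval (Zs m) (peval (zs (Suc m)) (foldr Tsum [2..<m+1] (Tsum (Suc m) g)))"
      using False Zs_step[of m] by simp
    also have "\<dots> = peval (Zs m) (foldr Tsum [2..<m+1] (peval (zs (Suc m)) (Tsum (Suc m) g)))"
      by (subst phi_comm_foldr) auto
    also have "\<dots> = peval (Zs m) (foldr Tsum [2..<m+1] (Tsum0 m g))"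
      using phi_Tsum[OF Suc.prems(2)] by simp
    also have "\<dots> = foldr Tsum0 [1..<m] (Tsum0 m g)"
      using Suc.IH[of "Tsum0 m g"] vars_Tsum0[OF Suc.prems(2)] False by simp
    also have "\<dots> = foldr Tsum0 [1..<Suc m] g" using False by simp
    finally show ?thesis .
  qed
qed



lemma cont_peval: "isCont (\<lambda>t::real. peval (\<lambda>k. a k + t * b k) G) t0"
  unfolding peval_def by (intro continuous_intros)

lemma lim_const:
  fixes p :: "real \<Rightarrow> real"
  assumes "isCont p 0" "eventually (\<lambda>t. p t = c) (at 0)"
  shows "p 0 = c"
proof -
  have "(p \<longlongrightarrow> p 0) (at 0)" using assms(1) by (simp add: isCont_def)
  moreover have "(p \<longlongrightarrow> c) (at 0)" using assms(2) by (rule tendsto_eventually)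
  ultimately show ?thesis by (rule tendsto_unique[OF at_neq_bot])
qed

lemma peval_scale:
  fixes y :: "nat \<Rightarrow> real"
  assumes "homogeneous d f"
  shows "peval (\<lambda>k. t * y k) f = t ^ d * peval y f"
  unfolding peval_def sum_distrib_left
proof (rule sum.cong)
  fix m assume m: "m \<in> Poly_Mapping.keys f"
  have "(\<Prod>v\<in>Poly_Mapping.keys m. (t * y v) ^ Poly_Mapping.lookup m v)
        = (\<Prod>v\<in>Poly_Mapping.keys m. t ^ Poly_Mapping.lookup m v) * (\<Prod>v\<in>Poly_Mapping.keys m. y v ^ Poly_Mapping.lookup m v)"
    by (simp add: power_mult_distrib prod.distrib)
  also have "(\<Prod>v\<in>Poly_Mapping.keys m. t ^ Poly_Mapping.lookup m v) = t ^ d"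
    using assms m by (simp add: homogeneous_def power_sum[symmetric])
  finally show "of_int (Poly_Mapping.lookup f m) * (\<Prod>v\<in>Poly_Mapping.keys m. (t * y v) ^ Poly_Mapping.lookup m v)
      = t ^ d * (of_int (Poly_Mapping.lookup f m) * (\<Prod>v\<in>Poly_Mapping.keys m. y v ^ Poly_Mapping.lookup m v))"
    by simp
qed simp

lemma dsym_scale:
  assumes "homogeneous (n-1) f" "t \<noteq> 0"
  shows "dsym n f (\<lambda>k. t * x k) = dsym n f x"
  unfolding dsym_def
proof (rule sum.cong)
  fix \<sigma> :: "nat \<Rightarrow> nat"
  have "(\<Prod>j\<in>{1..<n}. t * x (\<sigma> j) - t * x (\<sigma> (j + 1))) = (\<Prod>j\<in>{1..<n}. t * (x (\<sigma> j) - x (\<sigma> (j + 1))))"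
    by (simp add: algebra_simps)
  also have "\<dots> = t ^ (n-1) * (\<Prod>j\<in>{1..<n}. (x (\<sigma> j) - x (\<sigma> (j + 1))))"
    by (simp add: prod.distrib)
  finally have den: "(\<Prod>j\<in>{1..<n}. t * x (\<sigma> j) - t * x (\<sigma> (j + 1))) = t ^ (n-1) * (\<Prod>j\<in>{1..<n}. (x (\<sigma> j) - x (\<sigma> (j + 1))))" .
  have num: "peval (\<lambda>k. t * x (\<sigma> k)) f = t ^ (n-1) * peval (\<lambda>k. x (\<sigma> k)) f"
    by (rule peval_scale[OF assms(1)])
  show "peval (\<lambda>k. t * x (\<sigma> k)) f / (\<Prod>j\<in>{1..<n}. t * x (\<sigma> j) - t * x (\<sigma> (j + 1)))
      = peval (\<lambda>k. x (\<sigma> k)) f / (\<Prod>j\<in>{1..<n}. x (\<sigma> j) - x (\<sigma> (j + 1)))"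
    unfolding den num using assms(2) by simp
qed simp

lemma eventually_nz: "eventually (\<lambda>t::real. t \<noteq> 0) (at 0)"
  by (simp add: eventually_at_filter)

lemma stepA2:
  fixes x :: "nat \<Rightarrow> real"
  assumes hom: "homogeneous (n-1) f" and inj: "inj_on x {1..n}"
  shows "peval (\<lambda>_. 0) (foldr Tsum [2..<n+1] f) = dsym n f x"
proof -
  let ?G = "foldr Tsum [2..<n+1] f"
  let ?p = "\<lambda>t::real. peval (\<lambda>k. 0 + t * x k) ?G"
  have "?p 0 = dsym n f x"
  proof (rule lim_const[of ?p])
    show "isCont ?p 0" by (rule cont_peval)
    show "eventually (\<lambda>t. ?p t = dsym n f x) (at 0)"
      using eventually_nz
    proof (rule eventually_mono)
      fix t :: real assume t: "t \<noteq> 0"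
      have "inj_on (\<lambda>k. t * x k) {1..n}"
      proof (rule inj_onI)
        fix i j assume ij: "i \<in> {1..n}" "j \<in> {1..n}" and "t * x i = t * x j"
        then have "x i = x j" using t by simp
        then show "i = j" using inj ij by (blast dest: inj_onD)
      qed
      then have "?p t = dsym n f (\<lambda>k. t * x k)" using part1 by simp
      also have "\<dots> = dsym n f x" by (rule dsym_scale[OF hom t])
      finally show "?p t = dsym n f x" .
    qed
  qed
  then show ?thesis by simp
qed

lemma stepA3:
  fixes x :: "nat \<Rightarrow> real"
  assumes hom: "homogeneous (n-1) f"
  shows "peval (\<lambda>k. if 2 \<le> k \<and> k \<le> n then 0 else x k) (foldr Tsum [2..<n+1] f) = peval (\<lambda>_. 0) (foldr Tsum [2..<n+1] f)"
proof -
  let ?G = "foldr Tsum [2..<n+1] f"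
  define a where "a k = (if 2 \<le> k \<and> k \<le> n then 0 else x k)" for k
  define b where "b k = (if 2 \<le> k \<and> k \<le> n then real k else 0)" for k
  let ?p = "\<lambda>t::real. peval (\<lambda>k. a k + t * b k) ?G"
  define d where "d = (if x 1 = 0 then 1 else \<bar>x 1\<bar> / real (n+1))"
  have d: "d > 0" by (auto simp: d_def)
  have inj: "inj_on (\<lambda>k. a k + t * b k) {1..n}" if t: "t \<noteq> 0" "\<bar>t\<bar> < d" for t
  proof (rule inj_onI)
    fix i j assume i: "i \<in> {1..n}" and j: "j \<in> {1..n}" and eq: "a i + t * b i = a j + t * b j"
    have side: False if "k \<in> {2..n}" "x 1 = t * real k" for k
    proof (cases "x 1 = 0")
      case True then show False using that t by simp
    next
      case False
      have "\<bar>t\<bar> * real k \<le> \<bar>t\<bar> * real (n+1)" using that(1) by (intro mult_left_mono) auto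
      also have "\<dots> < \<bar>x 1\<bar>" using t False by (simp add: d_def field_simps)
      finally show False using that(2) by (simp add: abs_mult)
    qed
    show "i = j"
    proof (cases "i = 1")
      case True
      show ?thesis
      proof (rule ccontr)
        assume "i \<noteq> j"
        then have "j \<in> {2..n}" using j True by auto
        then show False using side[of j] eq True by (auto simp: a_def b_def)
      qed
    next
      case False
      then have i2: "i \<in> {2..n}" using i by auto
      show ?thesis
      proof (cases "j = 1")
        case True
        then show ?thesis using side[of i] eq i2 by (auto simp: a_def b_def)
      next
        case False
        then have "j \<in> {2..n}" using j by auto
        then show ?thesis using eq i2 t by (auto simp: a_def b_def)
      qed
    qed
  qed
  have "?p 0 = peval (\<lambda>_. 0) ?G"
  proof (rule lim_const[of ?p])
    show "isCont ?p 0" by (rule cont_peval)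
    have ev: "eventually (\<lambda>t::real. t \<noteq> 0 \<and> \<bar>t\<bar> < d) (at 0)"
      using d by (auto simp: eventually_at dist_real_def intro!: exI[of _ d])
    show "eventually (\<lambda>t. ?p t = peval (\<lambda>_. 0) ?G) (at 0)"
      using ev
    proof (rule eventually_mono)
      fix t :: real assume "t \<noteq> 0 \<and> \<bar>t\<bar> < d"
      then have "inj_on (\<lambda>k. a k + t * b k) {1..n}" using inj by blast
      then have "?p t = dsym n f (\<lambda>k. a k + t * b k)" using part1 by simp
      also have "\<dots> = peval (\<lambda>_. 0) ?G" using stepA2[OF hom \<open>inj_on _ _\<close>] by simp
      finally show "?p t = peval (\<lambda>_. 0) ?G" .
    qed
  qed
  then show ?thesis by (simp add: a_def[abs_def])
qed

theorem mainTheorem15: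
  fixes n :: nat and f :: zpoly
  assumes "vars f \<subseteq> {1..n}"
  shows "(\<forall>x::nat \<Rightarrow> real. inj_on x {1..n} \<longrightarrow>
            dsym n f x = peval x (foldr Tsum [2..<n+1] f))
       \<and> (n \<ge> 1 \<and> homogeneous (n - 1) f \<longrightarrow>
            (\<forall>x::nat \<Rightarrow> real. inj_on x {1..n} \<longrightarrow>
              dsym n f x = peval x (foldr Tsum0 [1..<n] f)))"
proof (intro conjI allI impI)
  fix x :: "nat \<Rightarrow> real" assume "inj_on x {1..n}"
  then show "dsym n f x = peval x (foldr Tsum [2..<n+1] f)" by (rule part1)
next
  fix x :: "nat \<Rightarrow> real"
  assume h: "1 \<le> n \<and> homogeneous (n - 1) f" and inj: "inj_on x {1..n}"
  let ?G = "foldr Tsum [2..<n+1] f"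
  have "peval x (foldr Tsum0 [1..<n] f) = peval x (peval (Zs n) ?G)"
    using chainC[of n f] h assms by simp
  also have "\<dots> = peval (\<lambda>k. if 2 \<le> k \<and> k \<le> n then 0 else x k) ?G"
    unfolding peval_peval by (rule arg_cong2[where f=peval]) (auto simp: fun_eq_iff Zs_def)
  also have "\<dots> = peval (\<lambda>_. 0) ?G" using stepA3 h by blast
  also have "\<dots> = dsym n f x" using stepA2 h inj by blast
  finally show "dsym n f x = peval x (foldr Tsum0 [1..<n] f)" by simp
qed


end
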